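(* Let $G$ be a countable group, let $\mathcal{L}:G\to[0,\infty)$ be subadditive (i.e.\ $\mathcal{L}(st)\le\mathcal{L}(s)+\mathcal{L}(t)$ for all $s,t\in G$), and let $\mu$ be a probability measure on $G$ with $\sum_{s\in G}\mu(s)\log(1+\mathcal{L}(s))<\infty$. Then \[ \mathrm{Ly}_{1+\mathcal{L}}(G,\mu)=\lim_{n\to\infty}\frac1n\sum_{s\in G}\mu^{*n}(s)\log(1+\mathcal{L}(s))=0. \]
   Context: $\mu^{*n}$ denotes the $n$-fold convolution power of $\mu$, where $\mu*\nu(s)=\sum_t\mu(t)\nu(t^{-1}s)$. *)

theory Defs
  imports "HOL-Analysis.Analysis" "HOL-Algebra.Group"
begin

definition conv :: "('a, 'b) monoid_scheme \<Rightarrow> ('a \<Rightarrow> real) \<Rightarrow> ('a \<Rightarrow> real) \<Rightarrow> 'a \<Rightarrow> real" where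
  "conv G \<mu> \<nu> s = (\<Sum>\<^sub>\<infinity>t\<in>carrier G. \<mu> t * \<nu> (inv\<^bsub>G\<^esub> t \<otimes>\<^bsub>G\<^esub> s))"

fun conv_pow :: "('a, 'b) monoid_scheme \<Rightarrow> ('a \<Rightarrow> real) \<Rightarrow> nat \<Rightarrow> 'a \<Rightarrow> real" where
  "conv_pow G \<mu> 0 = (\<lambda>s. if s = \<one>\<^bsub>G\<^esub> then 1 else 0)"
| "conv_pow G \<mu> (Suc n) = conv G (conv_pow G \<mu> n) \<mu>"

definition Ly :: "('a, 'b) monoid_scheme \<Rightarrow> ('a \<Rightarrow> real) \<Rightarrow> ('a \<Rightarrow> real) \<Rightarrow> real" where
  "Ly G L \<mu> = lim (\<lambda>n. (1 / real n) * (\<Sum>\<^sub>\<infinity>s\<in>carrier G. conv_pow G \<mu> n s * ln (1 + L s)))"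

end

theory Submission
  imports Defs
begin

lemma step_lemma:
  fixes G :: "('a, 'b) monoid_scheme"
  assumes grp: "group G"
    and q: "\<And>s. s\<in>carrier G \<Longrightarrow> q s \<ge> 0"
    and mu: "\<And>s. s\<in>carrier G \<Longrightarrow> \<mu> s \<ge> 0"
    and psi: "\<And>s. s\<in>carrier G \<Longrightarrow> \<psi> s \<ge> 0"
    and row: "\<And>t. t\<in>carrier G \<Longrightarrow> ((\<lambda>u. \<mu> u * \<psi> (t \<otimes>\<^bsub>G\<^esub> u)) has_sum r t) (carrier G)"
    and rs: "(\<lambda>t. q t * r t) summable_on carrier G"
  shows "(\<lambda>s. conv G q \<mu> s * \<psi> s) summable_on carrier G \<and>
         (\<Sum>\<^sub>\<infinity>s\<in>carrier G. conv G q \<mu> s * \<psi> s) = (\<Sum>\<^sub>\<infinity>t\<in>carrier G. q t * r t)"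
proof -
  interpret group G by (rule grp)
  define C where "C = carrier G"
  define F where "F = (\<lambda>t s. q t * \<mu> (inv\<^bsub>G\<^esub> t \<otimes>\<^bsub>G\<^esub> s) * \<psi> s)"
  have Fnn: "F t s \<ge> 0" if "t \<in> C" "s \<in> C" for t s
    using that q mu psi unfolding F_def C_def by (simp add: mult_nonneg_nonneg)
  have rnn: "r t \<ge> 0" if "t \<in> C" for t
    using row[of t] that mu psi unfolding C_def
    by (intro has_sum_nonneg[OF row[of t]]) (auto intro: mult_nonneg_nonneg)
  have row': "((\<lambda>s. F t s) has_sum q t * r t) C" if t: "t \<in> C" for t
  proof -
    have "((\<lambda>s. \<mu> (inv\<^bsub>G\<^esub> t \<otimes>\<^bsub>G\<^esub> s) * \<psi> s) has_sum r t) C"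
      unfolding C_def
      apply (subst has_sum_reindex_bij_witness[of "carrier G" "\<lambda>u. t \<otimes>\<^bsub>G\<^esub> u" "\<lambda>s. inv\<^bsub>G\<^esub> t \<otimes>\<^bsub>G\<^esub> s" "carrier G" "\<lambda>u. \<mu> u * \<psi> (t \<otimes>\<^bsub>G\<^esub> u)" _ "r t" "r t"])
      using t unfolding C_def
      by (auto simp: m_assoc[symmetric] row)
    then have "((\<lambda>s. q t * (\<mu> (inv\<^bsub>G\<^esub> t \<otimes>\<^bsub>G\<^esub> s) * \<psi> s)) has_sum q t * r t) C"
      by (rule has_sum_cmult_right)
    then show ?thesis unfolding F_def by (simp add: mult.assoc)
  qed
  have Fsum: "(\<lambda>(t,s). F t s) summable_on C \<times> C"
  proof -
    have rs1: "(\<lambda>s. norm (F t s)) summable_on C" if t: "t \<in> C" for t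
    proof -
      have "(\<lambda>s. F t s) summable_on C" using row'[OF t] by (auto simp: summable_on_def)
      then show ?thesis
        using summable_on_iff_abs_summable_on_real by auto
    qed
    have eq: "(\<Sum>\<^sub>\<infinity>y\<in>C. norm (F t y)) = q t * r t" if "t \<in> C" for t
    proof -
      have "(\<Sum>\<^sub>\<infinity>y\<in>C. norm (F t y)) = (\<Sum>\<^sub>\<infinity>y\<in>C. F t y)"
        using Fnn that by (intro infsum_cong) auto
      also have "\<dots> = q t * r t" using row'[OF that] by (simp add: infsumI)
      finally show ?thesis .
    qed
    have rs2: "(\<lambda>t. norm (\<Sum>\<^sub>\<infinity>y\<in>C. norm (F t y))) summable_on C"
    proof -
      have "(\<lambda>t. q t * r t) summable_on C" using rs C_def by simp
      moreover have "norm (\<Sum>\<^sub>\<infinity>y\<in>C. norm (F t y)) = q t * r t" if "t \<in> C" for t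
        using eq[OF that] q[of t] rnn[OF that] that unfolding C_def by simp
      ultimately show ?thesis using summable_on_cong by (metis (no_types, lifting))
    qed
    have "(\<lambda>x. norm ((\<lambda>(t,s). F t s) x)) summable_on Sigma C (\<lambda>_. C)"
      using Infinite_Sum.abs_summable_on_Sigma_iff[where f="\<lambda>(t,s). F t s" and A=C and B="\<lambda>_. C"] rs1 rs2 by auto
    from abs_summable_summable[OF this] show ?thesis by simp
  qed
  have swap: "(\<Sum>\<^sub>\<infinity>t\<in>C. \<Sum>\<^sub>\<infinity>s\<in>C. F t s) = (\<Sum>\<^sub>\<infinity>s\<in>C. \<Sum>\<^sub>\<infinity>t\<in>C. F t s)"
    using infsum_swap_banach[OF Fsum] .
  have Fsum': "(\<lambda>(s,t). F t s) summable_on C \<times> C"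
  proof -
    have "(\<lambda>(t,s). F t s) \<circ> prod.swap summable_on C \<times> C"
      using Fsum by (subst summable_on_reindex[symmetric]) (auto simp: product_swap)
    then show ?thesis by (simp add: o_def case_prod_unfold)
  qed
  have colsum: "(\<lambda>s. \<Sum>\<^sub>\<infinity>t\<in>C. F t s) summable_on C"
    using summable_on_Sigma_banach[of "\<lambda>s t. F t s" C "\<lambda>_. C"] Fsum' by simp
  have col: "(\<Sum>\<^sub>\<infinity>t\<in>C. F t s) = conv G q \<mu> s * \<psi> s" for s
    unfolding F_def conv_def C_def by (simp add: infsum_cmult_left')
  have rowi: "(\<Sum>\<^sub>\<infinity>s\<in>C. F t s) = q t * r t" if "t \<in> C" for t
    using row'[OF that] by (simp add: infsumI)
  show ?thesis
  proof
    show "(\<lambda>s. conv G q \<mu> s * \<psi> s) summable_on carrier G"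
      using colsum unfolding col by (simp add: C_def)
    have "(\<Sum>\<^sub>\<infinity>s\<in>carrier G. conv G q \<mu> s * \<psi> s) = (\<Sum>\<^sub>\<infinity>s\<in>C. \<Sum>\<^sub>\<infinity>t\<in>C. F t s)"
      unfolding col by (simp add: C_def)
    also have "\<dots> = (\<Sum>\<^sub>\<infinity>t\<in>C. \<Sum>\<^sub>\<infinity>s\<in>C. F t s)" using swap by simp
    also have "\<dots> = (\<Sum>\<^sub>\<infinity>t\<in>C. q t * r t)" using rowi by (rule infsum_cong)
    finally show "(\<Sum>\<^sub>\<infinity>s\<in>carrier G. conv G q \<mu> s * \<psi> s) = (\<Sum>\<^sub>\<infinity>t\<in>carrier G. q t * r t)"
      unfolding C_def .
  qed
qed

lemma lnlim: fixes K a :: real assumes K: "K > 0" and a: "a \<ge> 0"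
  shows "(\<lambda>n. ln (1 + real n * K + a) / real n) \<longlonglongrightarrow> 0"
proof (rule tendsto_sandwich[where f="\<lambda>_. 0" and h="\<lambda>n. ln (1 + K + a) / real n + ln (real n) / real n"])
  show "eventually (\<lambda>n. 0 \<le> ln (1 + real n * K + a) / real n) sequentially"
    using K a by (intro always_eventually allI divide_nonneg_nonneg ln_ge_zero) auto
  show "eventually (\<lambda>n. ln (1 + real n * K + a) / real n \<le> ln (1 + K + a) / real n + ln (real n) / real n) sequentially"
    using eventually_ge_at_top[of "1::nat"]
  proof eventually_elim
    case (elim n)
    then have n: "real n \<ge> 1" by simp
    have "1 + real n * K + a \<le> (1 + K + a) * real n"
      using n K a by (simp add: algebra_simps) (metis add_mono mult_right_mono less_imp_le mult.commute mult_1_right n)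
    then have "ln (1 + real n * K + a) \<le> ln ((1 + K + a) * real n)"
    proof (rule ln_mono)
      have "real n * K \<ge> 0" using K n by simp
      then show "0 < 1 + real n * K + a" using a by linarith
    qed
    also have "\<dots> = ln (1 + K + a) + ln (real n)" using K a n by (subst ln_mult) auto
    finally show ?case using n by (simp add: add_divide_distrib[symmetric] divide_right_mono)
  qed
  show "(\<lambda>_. 0::real) \<longlonglongrightarrow> 0" by simp
  have "(\<lambda>n. ln (1 + K + a) / real n + ln (real n) / real n) \<longlonglongrightarrow> 0 + 0"
    by (intro tendsto_add lim_ln_over_n tendsto_divide_0[OF tendsto_const] filterlim_at_top_imp_at_infinity[OF filterlim_real_sequentially])
  then show "(\<lambda>n. ln (1 + K + a) / real n + ln (real n) / real n) \<longlonglongrightarrow> 0" by simp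
qed

lemma ineq:
  fixes c K a b x :: real
  assumes "c \<ge> 1" "K \<ge> 0" "a \<ge> 0" "b \<ge> 0" "x \<le> a + b" "x \<ge> 0"
  shows "ln (c + x) \<le> ln (c + K + a) + (if b > K then ln (1 + b) else 0)"
proof (cases "b > K")
  case True
  have m: "1 * b \<le> (c + K + a) * b" using assms by (intro mult_right_mono) auto
  have "(c + K + a) * (1 + b) = c + K + a + (c + K + a) * b" by (simp add: algebra_simps)
  then have "c + x \<le> (c + K + a) * (1 + b)" using assms m by linarith
  then have "ln (c + x) \<le> ln ((c + K + a) * (1 + b))" using assms by (intro ln_mono) auto
  also have "\<dots> = ln (c + K + a) + ln (1 + b)" using assms by (subst ln_mult) auto
  finally show ?thesis using True by simp
next
  case False
  have "ln (c + x) \<le> ln (c + K + a)" using assms False by (intro ln_mono) auto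
  then show ?thesis using False by simp
qed

lemma prob_lemma:
  fixes G :: "('a, 'b) monoid_scheme"
  assumes grp: "group G"
    and mu: "\<And>s. s\<in>carrier G \<Longrightarrow> \<mu> s \<ge> 0"
    and mu1: "(\<mu> has_sum 1) (carrier G)"
  shows "(\<forall>s\<in>carrier G. conv_pow G \<mu> n s \<ge> 0) \<and> (conv_pow G \<mu> n has_sum 1) (carrier G)"
proof (induction n)
  case 0
  interpret group G by (rule grp)
  have "(conv_pow G \<mu> 0 has_sum 1) {\<one>\<^bsub>G\<^esub>}" by (rule has_sum_finiteI) auto
  then have "(conv_pow G \<mu> 0 has_sum 1) (carrier G)"
    by (rule has_sum_cong_neutral[THEN iffD1, rotated -1]) auto
  then show ?case by simp
next
  case (Suc n)
  interpret group G by (rule grp)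
  have qn: "\<And>s. s \<in> carrier G \<Longrightarrow> conv_pow G \<mu> n s \<ge> 0" using Suc by auto
  have one: "\<And>s. s \<in> carrier G \<Longrightarrow> (0::real) \<le> (\<lambda>_. 1) s" by simp
  have st: "(\<lambda>s. conv G (conv_pow G \<mu> n) \<mu> s * 1) summable_on carrier G \<and>
         (\<Sum>\<^sub>\<infinity>s\<in>carrier G. conv G (conv_pow G \<mu> n) \<mu> s * 1) = (\<Sum>\<^sub>\<infinity>t\<in>carrier G. conv_pow G \<mu> n t * 1)"
  proof (rule step_lemma[OF grp qn mu one, where r="\<lambda>_. 1"])
    show "((\<lambda>u. \<mu> u * 1) has_sum 1) (carrier G)" if "t \<in> carrier G" for t
      using mu1 by simp
    have "conv_pow G \<mu> n summable_on carrier G" using Suc unfolding summable_on_def by blast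
    then show "(\<lambda>t. conv_pow G \<mu> n t * 1) summable_on carrier G" by simp
  qed
  have s1: "(\<Sum>\<^sub>\<infinity>t\<in>carrier G. conv_pow G \<mu> n t) = 1" using Suc by (simp add: infsumI)
  have cs: "conv G (conv_pow G \<mu> n) \<mu> summable_on carrier G" using st by simp
  have ci: "infsum (conv G (conv_pow G \<mu> n) \<mu>) (carrier G) = 1" using st s1 by simp
  have "(conv_pow G \<mu> (Suc n) has_sum 1) (carrier G)"
    using has_sum_infsum[OF cs] unfolding ci by simp
  moreover have "conv_pow G \<mu> (Suc n) s \<ge> 0" if "s \<in> carrier G" for s
    unfolding conv_pow.simps conv_def
    by (rule infsum_nonneg) (use that qn mu in auto)
  ultimately show ?case by auto
qed

lemma bound_lemma:
  fixes G :: "('a, 'b) monoid_scheme" and L :: "'a \<Rightarrow> real" and \<mu> :: "'a \<Rightarrow> real"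
  assumes grp: "group G"
    and Lnn: "\<And>s. s\<in>carrier G \<Longrightarrow> L s \<ge> 0"
    and Lsub: "\<And>s t. s\<in>carrier G \<Longrightarrow> t\<in>carrier G \<Longrightarrow> L (s \<otimes>\<^bsub>G\<^esub> t) \<le> L s + L t"
    and mu: "\<And>s. s\<in>carrier G \<Longrightarrow> \<mu> s \<ge> 0"
    and mu1: "(\<mu> has_sum 1) (carrier G)"
    and msum: "(\<lambda>s. \<mu> s * ln (1 + L s)) summable_on carrier G"
    and K: "K \<ge> 0"
    and epsdef: "\<epsilon> = (\<Sum>\<^sub>\<infinity>u\<in>carrier G. \<mu> u * (if L u > K then ln (1 + L u) else 0))"
  shows "\<forall>c\<ge>1. (\<lambda>s. conv_pow G \<mu> n s * ln (c + L s)) summable_on carrier G \<and>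
      (\<Sum>\<^sub>\<infinity>s\<in>carrier G. conv_pow G \<mu> n s * ln (c + L s)) \<le> ln (c + real n * K + L \<one>\<^bsub>G\<^esub>) + real n * \<epsilon>"
proof (induction n)
  case 0
  interpret group G by (rule grp)
  show ?case
  proof (intro allI impI)
    fix c :: real assume c: "c \<ge> 1"
    have "((\<lambda>s. conv_pow G \<mu> 0 s * ln (c + L s)) has_sum ln (c + L \<one>\<^bsub>G\<^esub>)) {\<one>\<^bsub>G\<^esub>}" by (rule has_sum_finiteI) auto
    then have h: "((\<lambda>s. conv_pow G \<mu> 0 s * ln (c + L s)) has_sum ln (c + L \<one>\<^bsub>G\<^esub>)) (carrier G)"
      by (rule has_sum_cong_neutral[THEN iffD1, rotated -1]) auto
    then show "(\<lambda>s. conv_pow G \<mu> 0 s * ln (c + L s)) summable_on carrier G \<and>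
      (\<Sum>\<^sub>\<infinity>s\<in>carrier G. conv_pow G \<mu> 0 s * ln (c + L s)) \<le> ln (c + real 0 * K + L \<one>\<^bsub>G\<^esub>) + real 0 * \<epsilon>"
      by (auto simp: summable_on_def infsumI)
  qed
next
  case (Suc n)
  interpret group G by (rule grp)
  define C where "C = carrier G"
  define q where "q = conv_pow G \<mu> n"
  define chi where "chi = (\<lambda>u. if L u > K then ln (1 + L u) else 0)"
  have pr: "(\<forall>s\<in>C. q s \<ge> 0) \<and> (q has_sum 1) C"
    unfolding q_def C_def by (rule prob_lemma[OF grp mu mu1])
  have qnn: "\<And>s. s \<in> C \<Longrightarrow> q s \<ge> 0" using pr by auto
  have q1: "(q has_sum 1) C" using pr by auto
  have musum: "\<mu> summable_on C" using mu1 C_def by (auto simp: summable_on_def)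
  have mu1': "infsum \<mu> C = 1" using mu1 C_def by (simp add: infsumI)
  have chisum: "(\<lambda>u. \<mu> u * chi u) summable_on C"
    by (rule summable_on_comparison_test[OF msum[folded C_def]])
       (use mu Lnn in \<open>auto simp: chi_def C_def intro!: mult_left_mono mult_nonneg_nonneg\<close>)
  have eps: "\<epsilon> = (\<Sum>\<^sub>\<infinity>u\<in>C. \<mu> u * chi u)" using epsdef by (simp add: C_def chi_def)
  show ?case
  proof (intro allI impI)
    fix c :: real assume c: "c \<ge> 1"
    define B where "B = (\<lambda>t. ln (c + K + L t))"
    have IH: "(\<lambda>s. q s * B s) summable_on C \<and>
      (\<Sum>\<^sub>\<infinity>s\<in>C. q s * B s) \<le> ln ((c + K) + real n * K + L \<one>\<^bsub>G\<^esub>) + real n * \<epsilon>"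
      using Suc[rule_format, of "c + K"] c K unfolding q_def C_def B_def by simp
    have Bnn: "B t \<ge> 0" if "t \<in> C" for t using Lnn[of t] that c K by (simp add: B_def C_def)
    have psi: "ln (c + L s) \<ge> 0" if "s \<in> carrier G" for s
    proof -
      have "1 \<le> c + L s" using Lnn[OF that] c by linarith
      then show ?thesis by simp
    qed
    define r where "r = (\<lambda>t. \<Sum>\<^sub>\<infinity>u\<in>C. \<mu> u * ln (c + L (t \<otimes>\<^bsub>G\<^esub> u)))"
    have pw: "\<mu> u * ln (c + L (t \<otimes>\<^bsub>G\<^esub> u)) \<le> \<mu> u * B t + \<mu> u * chi u" if "t \<in> C" "u \<in> C" for t u
    proof -
      have "ln (c + L (t \<otimes>\<^bsub>G\<^esub> u)) \<le> B t + chi u"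
        unfolding B_def chi_def
        by (rule ineq) (use that c K Lnn Lsub in \<open>auto simp: C_def\<close>)
      then show ?thesis using mu[of u] that by (simp add: C_def distrib_left[symmetric] mult_left_mono)
    qed
    have sb: "(\<lambda>u. \<mu> u * B t + \<mu> u * chi u) summable_on C" for t
        by (intro summable_on_add summable_on_cmult_left musum chisum)
    have rsum: "(\<lambda>u. \<mu> u * ln (c + L (t \<otimes>\<^bsub>G\<^esub> u))) summable_on C" if t: "t \<in> C" for t
    proof (rule summable_on_comparison_test[of "\<lambda>u. \<mu> u * B t + \<mu> u * chi u"])
      show "(\<lambda>u. \<mu> u * B t + \<mu> u * chi u) summable_on C" by (rule sb)
    qed (use pw t mu psi in \<open>auto simp: C_def\<close>)
    have rbound: "r t \<le> B t + \<epsilon>" if t: "t \<in> C" for t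
    proof -
      have "r t \<le> (\<Sum>\<^sub>\<infinity>u\<in>C. \<mu> u * B t + \<mu> u * chi u)"
        unfolding r_def
        by (rule infsum_mono[OF rsum[OF t] sb]) (use pw t in auto)
      also have "\<dots> = (\<Sum>\<^sub>\<infinity>u\<in>C. \<mu> u * B t) + (\<Sum>\<^sub>\<infinity>u\<in>C. \<mu> u * chi u)"
        by (rule infsum_add) (auto intro: summable_on_cmult_left musum chisum)
      also have "(\<Sum>\<^sub>\<infinity>u\<in>C. \<mu> u * B t) = B t"
        using mu1' by (simp add: infsum_cmult_left')
      finally show ?thesis using eps by simp
    qed
    have rnn: "r t \<ge> 0" if "t \<in> C" for t
      unfolding r_def by (rule infsum_nonneg) (use that mu psi in \<open>auto simp: C_def\<close>)
    have qBsum: "(\<lambda>t. q t * B t + q t * \<epsilon>) summable_on C"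
      using IH q1 by (intro summable_on_add summable_on_cmult_left) (auto simp: summable_on_def)
    have qrsum: "(\<lambda>t. q t * r t) summable_on C"
      by (rule summable_on_comparison_test[OF qBsum])
         (use qnn rnn rbound in \<open>auto simp: distrib_left[symmetric] intro: mult_left_mono\<close>)
    have st: "(\<lambda>s. conv G q \<mu> s * ln (c + L s)) summable_on carrier G \<and>
         (\<Sum>\<^sub>\<infinity>s\<in>carrier G. conv G q \<mu> s * ln (c + L s)) = (\<Sum>\<^sub>\<infinity>t\<in>carrier G. q t * r t)"
      by (rule step_lemma[OF grp _ mu psi, where r=r])
         (use qnn qrsum rsum in \<open>auto simp: C_def r_def summable_iff_has_sum_infsum[symmetric]\<close>)
    have "(\<Sum>\<^sub>\<infinity>t\<in>C. q t * r t) \<le> (\<Sum>\<^sub>\<infinity>t\<in>C. q t * B t + q t * \<epsilon>)"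
      by (rule infsum_mono[OF qrsum qBsum]) (use qnn rnn rbound in \<open>auto simp: distrib_left[symmetric] intro: mult_left_mono\<close>)
    also have "\<dots> = (\<Sum>\<^sub>\<infinity>t\<in>C. q t * B t) + (\<Sum>\<^sub>\<infinity>t\<in>C. q t * \<epsilon>)"
      using IH q1 by (intro infsum_add summable_on_cmult_left) (auto simp: summable_on_def)
    also have "(\<Sum>\<^sub>\<infinity>t\<in>C. q t * \<epsilon>) = \<epsilon>"
      using q1 by (simp add: infsum_cmult_left' infsumI)
    finally have "(\<Sum>\<^sub>\<infinity>t\<in>C. q t * r t) \<le> ln ((c + K) + real n * K + L \<one>\<^bsub>G\<^esub>) + real n * \<epsilon> + \<epsilon>"
      using IH by linarith
    then show "(\<lambda>s. conv_pow G \<mu> (Suc n) s * ln (c + L s)) summable_on carrier G \<and>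
      (\<Sum>\<^sub>\<infinity>s\<in>carrier G. conv_pow G \<mu> (Suc n) s * ln (c + L s)) \<le> ln (c + real (Suc n) * K + L \<one>\<^bsub>G\<^esub>) + real (Suc n) * \<epsilon>"
      using st unfolding q_def C_def by (simp add: algebra_simps)
  qed
qed


lemma tail_lemma:
  fixes L \<mu> :: "'a \<Rightarrow> real"
  assumes Lnn: "\<And>s. s\<in>A \<Longrightarrow> L s \<ge> 0" and mu: "\<And>s. s\<in>A \<Longrightarrow> \<mu> s \<ge> 0"
    and msum: "(\<lambda>s. \<mu> s * ln (1 + L s)) summable_on A" and e: "e > 0"
  shows "\<exists>K>0. (\<Sum>\<^sub>\<infinity>u\<in>A. \<mu> u * (if L u > K then ln (1 + L u) else 0)) < e"
proof -
  define g where "g = (\<lambda>s. \<mu> s * ln (1 + L s))"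
  obtain F where F: "finite F" "F \<subseteq> A" "dist (sum g F) (infsum g A) \<le> e/2"
    using infsum_finite_approximation[of g A "e/2"] msum e unfolding g_def by auto
  define K where "K = 1 + sum L F"
  have sF: "sum L F \<ge> 0" using F Lnn by (intro sum_nonneg) auto
  have K0: "K > 0" using sF K_def by simp
  have LK: "L u \<le> K" if "u \<in> F" for u
  proof -
    have "L u \<le> sum L F" using F that Lnn by (intro member_le_sum) auto
    then show ?thesis unfolding K_def by simp
  qed
  define h where "h = (\<lambda>u. \<mu> u * (if L u > K then ln (1 + L u) else 0))"
  have gnn: "g u \<ge> 0" if "u \<in> A" for u using mu Lnn that unfolding g_def by simp
  have hg: "h u \<le> g u" "h u \<ge> 0" if "u \<in> A" for u
    using mu[OF that] Lnn[OF that] unfolding h_def g_def by auto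
  have gsA: "g summable_on A" using msum g_def by simp
  have gsD: "g summable_on (A - F)" using gsA by (rule summable_on_subset) auto
  have hsD: "h summable_on (A - F)"
    by (rule summable_on_comparison_test[OF gsD]) (use hg in auto)
  have "infsum h A = infsum h (A - F)"
    by (rule infsum_cong_neutral) (use F in \<open>auto simp: h_def dest: LK\<close>)
  also have "\<dots> \<le> infsum g (A - F)"
    by (rule infsum_mono[OF hsD gsD]) (use hg in auto)
  also have "infsum g (A - F) = infsum g A - sum g F"
  proof -
    have "infsum g (F \<union> (A - F)) = infsum g F + infsum g (A - F)"
      by (rule infsum_Un_disjoint[OF summable_on_finite[OF F(1)] gsD]) blast
    moreover have "F \<union> (A - F) = A" using F by auto
    ultimately show ?thesis using F by simp
  qed
  also have "\<dots> \<le> e/2" using F(3) unfolding dist_real_def by linarith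
  finally have "infsum h A < e" using e by simp
  then show ?thesis using K0 unfolding h_def by blast
qed

theorem theorem3p6:
  fixes G :: "('a, 'b) monoid_scheme" and L :: "'a \<Rightarrow> real" and \<mu> :: "'a \<Rightarrow> real"
  assumes "group G"
    and "countable (carrier G)"
    and "\<forall>s\<in>carrier G. L s \<ge> 0"
    and "\<forall>s\<in>carrier G. \<forall>t\<in>carrier G. L (s \<otimes>\<^bsub>G\<^esub> t) \<le> L s + L t"
    and "\<forall>s\<in>carrier G. \<mu> s \<ge> 0"
    and "(\<mu> has_sum 1) (carrier G)"
    and "(\<lambda>s. \<mu> s * ln (1 + L s)) summable_on carrier G"
  shows "(\<lambda>n. (1 / real n) * (\<Sum>\<^sub>\<infinity>s\<in>carrier G. conv_pow G \<mu> n s * ln (1 + L s)))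
           \<longlonglongrightarrow> 0
         \<and> Ly G L \<mu> = 0"
proof -
  note grp = assms(1)
  have Lnn: "\<And>s. s\<in>carrier G \<Longrightarrow> L s \<ge> 0" using assms(3) by auto
  have Lsub: "\<And>s t. s\<in>carrier G \<Longrightarrow> t\<in>carrier G \<Longrightarrow> L (s \<otimes>\<^bsub>G\<^esub> t) \<le> L s + L t"
    using assms(4) by auto
  have mu: "\<And>s. s\<in>carrier G \<Longrightarrow> \<mu> s \<ge> 0" using assms(5) by auto
  note mu1 = assms(6) and msum = assms(7)
  interpret group G by (rule grp)
  define E where "E = (\<lambda>n. (\<Sum>\<^sub>\<infinity>s\<in>carrier G. conv_pow G \<mu> n s * ln (1 + L s)))"
  have Enn: "E n \<ge> 0" for n
    unfolding E_def
    by (rule infsum_nonneg) (use prob_lemma[OF grp mu mu1, of n] Lnn in auto)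
  have lim: "(\<lambda>n. (1 / real n) * E n) \<longlonglongrightarrow> 0"
  proof (rule tendstoI)
    fix e :: real assume e: "e > 0"
    have "\<exists>K>0. (\<Sum>\<^sub>\<infinity>u\<in>carrier G. \<mu> u * (if L u > K then ln (1 + L u) else 0)) < e/2"
      by (rule tail_lemma[OF Lnn mu msum]) (use e in simp_all)
    then obtain K where K: "K > 0"
      and tl: "(\<Sum>\<^sub>\<infinity>u\<in>carrier G. \<mu> u * (if L u > K then ln (1 + L u) else 0)) < e/2"
      by blast
    define \<epsilon> where "\<epsilon> = (\<Sum>\<^sub>\<infinity>u\<in>carrier G. \<mu> u * (if L u > K then ln (1 + L u) else 0))"
    have bd: "E n \<le> ln (1 + real n * K + L \<one>\<^bsub>G\<^esub>) + real n * \<epsilon>" for n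
    proof -
      have K0: "K \<ge> 0" using K by simp
      have "\<forall>c\<ge>1. (\<lambda>s. conv_pow G \<mu> n s * ln (c + L s)) summable_on carrier G \<and>
        (\<Sum>\<^sub>\<infinity>s\<in>carrier G. conv_pow G \<mu> n s * ln (c + L s)) \<le> ln (c + real n * K + L \<one>\<^bsub>G\<^esub>) + real n * \<epsilon>"
        by (rule bound_lemma[OF grp Lnn Lsub mu mu1 msum K0 \<epsilon>_def])
      then have "(\<Sum>\<^sub>\<infinity>s\<in>carrier G. conv_pow G \<mu> n s * ln (1 + L s)) \<le> ln (1 + real n * K + L \<one>\<^bsub>G\<^esub>) + real n * \<epsilon>"
        by blast
      then show ?thesis unfolding E_def .
    qed
    have "eventually (\<lambda>n. ln (1 + real n * K + L \<one>\<^bsub>G\<^esub>) / real n < e/2) sequentially"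
      using lnlim[OF K Lnn[OF one_closed]] e by (intro order_tendstoD) auto
    moreover have "eventually (\<lambda>n. n \<ge> 1) sequentially" by (rule eventually_ge_at_top)
    ultimately show "eventually (\<lambda>n. dist ((1 / real n) * E n) 0 < e) sequentially"
    proof eventually_elim
      case (elim n)
      have "(1 / real n) * E n \<le> (1 / real n) * (ln (1 + real n * K + L \<one>\<^bsub>G\<^esub>) + real n * \<epsilon>)"
        using bd[of n] elim by (intro mult_left_mono) auto
      also have "\<dots> = ln (1 + real n * K + L \<one>\<^bsub>G\<^esub>) / real n + \<epsilon>"
        using elim by (simp add: field_simps)
      finally have A: "(1 / real n) * E n \<le> ln (1 + real n * K + L \<one>\<^bsub>G\<^esub>) / real n + \<epsilon>" .
      have B: "ln (1 + real n * K + L \<one>\<^bsub>G\<^esub>) / real n < e/2" using elim by simp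
      have C: "\<epsilon> < e/2" using tl \<epsilon>_def by simp
      have "(1 / real n) * E n < e" using A B C by linarith
      moreover have "(1 / real n) * E n \<ge> 0" using Enn[of n] by simp
      ultimately show ?case by (simp add: dist_real_def)
    qed
  qed
  moreover have "Ly G L \<mu> = 0"
    unfolding Ly_def using lim unfolding E_def by (rule limI)
  ultimately show ?thesis unfolding E_def by simp
qed

end
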